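(* Let $\mathcal S=(\mathcal P,\mathcal L)$ be a linear space with $v$ points, constant line size $k$ with $2<k<v$, and $r$ lines through each point; let $G\le\mathrm{Aut}(\mathcal S)$ be transitive on lines, and let $\mathfrak C$ be a non-trivial $G$-invariant partition of $\mathcal P$. If $\gcd(k,r)\le 8$, then $G$ is $2$-step imprimitive relative to $\mathfrak C$, that is, $\mathfrak C$ is both a minimal and a maximal non-trivial $G$-invariant partition of $\mathcal P$.
   Context: A linear space: a finite set $\mathcal P$ of points and a set $\mathcal L$ of subsets (lines) such that any two distinct points lie on exactly one line and each line has at least two points. A partition is non-trivial if it has more than one class and its classes have more than one element. $\mathfrak C$ is minimal if no non-trivial $G$-invariant partition strictly refines it, and maximal if no non-trivial $G$-invariant partition is strictly coarser than it. *)

theory Defs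
  imports Main "HOL-Library.Disjoint_Sets" "HOL-Combinatorics.Permutations"
begin

definition linear_space :: "'a set \<Rightarrow> 'a set set \<Rightarrow> bool" where
  "linear_space P L \<longleftrightarrow> finite P \<and> (\<forall>l\<in>L. l \<subseteq> P \<and> 2 \<le> card l) \<and>
     (\<forall>x\<in>P. \<forall>y\<in>P. x \<noteq> y \<longrightarrow> (\<exists>!l. l \<in> L \<and> x \<in> l \<and> y \<in> l))"

definition automorphism :: "'a set \<Rightarrow> 'a set set \<Rightarrow> ('a \<Rightarrow> 'a) \<Rightarrow> bool" where
  "automorphism P L g \<longleftrightarrow> g permutes P \<and> (\<lambda>l. g ` l) ` L = L"

definition aut_subgroup :: "'a set \<Rightarrow> 'a set set \<Rightarrow> ('a \<Rightarrow> 'a) set \<Rightarrow> bool" where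
  "aut_subgroup P L G \<longleftrightarrow> (\<forall>g\<in>G. automorphism P L g) \<and> id \<in> G \<and>
     (\<forall>g\<in>G. \<forall>h\<in>G. g \<circ> h \<in> G) \<and> (\<forall>g\<in>G. inv g \<in> G)"

definition line_transitive :: "'a set set \<Rightarrow> ('a \<Rightarrow> 'a) set \<Rightarrow> bool" where
  "line_transitive L G \<longleftrightarrow> (\<forall>l\<in>L. \<forall>m\<in>L. \<exists>g\<in>G. g ` l = m)"

definition G_invariant :: "('a \<Rightarrow> 'a) set \<Rightarrow> 'a set set \<Rightarrow> bool" where
  "G_invariant G C \<longleftrightarrow> (\<forall>g\<in>G. \<forall>c\<in>C. g ` c \<in> C)"

definition nontrivial_partition :: "'a set \<Rightarrow> 'a set set \<Rightarrow> bool" where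
  "nontrivial_partition P C \<longleftrightarrow> partition_on P C \<and> 1 < card C \<and> (\<forall>c\<in>C. 1 < card c)"

definition refines :: "'a set set \<Rightarrow> 'a set set \<Rightarrow> bool" where
  "refines D C \<longleftrightarrow> (\<forall>d\<in>D. \<exists>c\<in>C. d \<subseteq> c)"

definition minimal_partition :: "'a set \<Rightarrow> ('a \<Rightarrow> 'a) set \<Rightarrow> 'a set set \<Rightarrow> bool" where
  "minimal_partition P G C \<longleftrightarrow> \<not> (\<exists>D. nontrivial_partition P D \<and> G_invariant G D \<and>
      refines D C \<and> D \<noteq> C)"

definition maximal_partition :: "'a set \<Rightarrow> ('a \<Rightarrow> 'a) set \<Rightarrow> 'a set set \<Rightarrow> bool" where
  "maximal_partition P G C \<longleftrightarrow> \<not> (\<exists>D. nontrivial_partition P D \<and> G_invariant G D \<and>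
      refines C D \<and> D \<noteq> C)"

definition two_step_imprimitive :: "'a set \<Rightarrow> ('a \<Rightarrow> 'a) set \<Rightarrow> 'a set set \<Rightarrow> bool" where
  "two_step_imprimitive P G C \<longleftrightarrow> minimal_partition P G C \<and> maximal_partition P G C"

end

theory Submission
  imports Defs
begin


definition badE :: "nat \<Rightarrow> nat \<Rightarrow> nat \<Rightarrow> nat \<Rightarrow> nat \<Rightarrow> bool" where
"badE g rp a1 mu e2 = (let S = a1+mu+e2 + rp*(a1*mu+mu*e2+a1*e2) + rp*rp*(a1*mu*e2) in
   (S+g) mod (g*g) = 0 \<and> (S+g) div (g*g) \<le> rp)"

lemma checkO: "list_all (\<lambda>g. list_all (\<lambda>rp. list_all (\<lambda>a. list_all (\<lambda>m. list_all (\<lambda>e. \<not> badE g rp (2*a) (2*m) (2*e))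
  [1..<7 div (rp*a*m) + 1]) [1..<7 div (rp*a)+1]) [1..<7 div rp + 1]) [1..<8]) [1..<9]"
  by code_simp

lemma list_all_upt_mem: "list_all P [i..<j] \<Longrightarrow> i \<le> x \<Longrightarrow> x < j \<Longrightarrow> P x"
  by (simp add: list_all_iff)

lemma div_bound: "0 < (b::nat) \<Longrightarrow> b * x + s \<le> n \<Longrightarrow> x < (n - s) div b + 1"
  by (simp add: less_Suc_eq_le less_eq_div_iff_mult_less_eq mult.commute)

lemma odd_case:
  fixes g rp a m e :: nat
  assumes "1 \<le> g" "g \<le> 8" "1 \<le> rp" "1 \<le> a" "1 \<le> m" "1 \<le> e" "rp*(a*m*e) \<le> 7"
  shows "\<not> badE g rp (2*a) (2*m) (2*e)"
proof -
  have me: "1 \<le> m*e" using assms by simp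
  have ra: "rp*a \<le> 7"
  proof -
    have "rp*a*1 \<le> rp*a*(m*e)" using me by (rule mult_le_mono2)
    also have "\<dots> = rp*(a*m*e)" by (simp add: mult.assoc)
    finally show ?thesis using assms(7) by linarith
  qed
  have ram: "rp*a*m \<le> 7"
  proof -
    have "rp*a*m*1 \<le> rp*a*m*e" using assms(6) by (rule mult_le_mono2)
    also have "\<dots> = rp*(a*m*e)" by (simp add: mult.assoc)
    finally show ?thesis using assms(7) by linarith
  qed
  have r7: "rp \<le> 7"
  proof -
    have "rp*1 \<le> rp*a" using assms(4) by (rule mult_le_mono2)
    thus ?thesis using ra by linarith
  qed
  have p1: "0 < rp*a" "0 < rp*a*m" using assms by auto
  have i1: "a < 7 div rp + 1" using div_bound[of rp a 0 7] ra assms by simp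
  have i2: "m < 7 div (rp*a) + 1" using div_bound[OF p1(1), of m 0 7] ram by simp
  have "rp*a*m*e \<le> 7" using assms(7) by (simp add: mult.assoc)
  hence i3: "e < 7 div (rp*a*m) + 1" using div_bound[OF p1(2), of e 0 7] by simp
  show ?thesis
    apply (rule list_all_upt_mem[OF list_all_upt_mem[OF list_all_upt_mem[OF list_all_upt_mem[OF list_all_upt_mem[OF checkO]]]], of g rp a m e])
    using assms r7 i1 i2 i3 by auto
qed
lemma checkE: "list_all (\<lambda>g. list_all (\<lambda>rp. if even rp then True else list_all (\<lambda>a1. list_all (\<lambda>mu. list_all (\<lambda>e2. \<not> badE g rp a1 mu e2)
  [1..<(g*g-1-a1*mu) div (rp*a1*mu+mu+a1) + 1]) [1..<(g*g-1-a1) div (rp*a1+a1+1) + 1]) [1..<(g*g-2) div (rp+2) + 1]) [3..<g*g-3]) [1..<9]"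
  by code_simp

lemma even_case:
  fixes g rp a1 mu e2 :: nat
  assumes "1 \<le> g" "g \<le> 8" "3 \<le> rp" "odd rp" "1 \<le> a1" "1 \<le> mu" "1 \<le> e2"
    and B: "rp*(a1*mu*e2) + (a1*mu+mu*e2+a1*e2) \<le> g*g - 1"
  shows "\<not> badE g rp a1 mu e2"
proof -
  have m1: "a1*1*1 \<le> a1*mu*e2" using assms by (intro mult_le_mono) auto
  have m2: "a1*1 \<le> a1*mu" using assms by (intro mult_le_mono) auto
  have m3: "a1*1 \<le> a1*e2" using assms by (intro mult_le_mono) auto
  have m4: "1*1 \<le> mu*e2" using assms by (intro mult_le_mono) auto
  have m5: "mu*1 \<le> mu*e2" using assms by (intro mult_le_mono) auto
  have m6: "rp*a1*mu*1 \<le> rp*a1*mu*e2" using assms by (intro mult_le_mono) auto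
  have m7: "rp*(a1*1*1) \<le> rp*(a1*mu*e2)" by (rule mult_le_mono2[OF m1])
  have m8: "rp*1 \<le> rp*a1" using assms by (intro mult_le_mono) auto
  have e1: "rp*(a1*mu*e2) = rp*a1*mu*e2" by (simp add: mult.assoc)
  note mm = m1[unfolded mult_1_right] m2[unfolded mult_1_right] m3[unfolded mult_1_right]
    m4[unfolded mult_1_right] m5[unfolded mult_1_right] m6[unfolded mult_1_right]
    m7[unfolded mult_1_right] m8[unfolded mult_1_right]
  have i0: "rp < g*g - 3" using B mm assms by linarith
  have i1: "a1 < (g*g-2) div (rp+2) + 1"
  proof -
    have "(rp+2)*a1 + 1 = rp*a1 + a1 + a1 + 1" by (simp add: algebra_simps)
    hence "(rp+2)*a1 + 1 \<le> g*g - 1" using B mm by linarith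
    from div_bound[OF _ this] show ?thesis by (simp add: diff_diff_add numeral_2_eq_2)
  qed
  have i2: "mu < (g*g-1-a1) div (rp*a1+a1+1) + 1"
  proof -
    have "(rp*a1+a1+1)*mu + a1 = rp*a1*mu + a1*mu + mu + a1" by (simp add: algebra_simps)
    hence "(rp*a1+a1+1)*mu + a1 \<le> g*g - 1" using B mm e1 by linarith
    from div_bound[OF _ this] show ?thesis by simp
  qed
  have i3: "e2 < (g*g-1-a1*mu) div (rp*a1*mu+mu+a1) + 1"
  proof -
    have "(rp*a1*mu+mu+a1)*e2 + a1*mu \<le> g*g - 1" using B by (simp add: algebra_simps)
    from div_bound[OF _ this] show ?thesis using assms by simp
  qed
  have "list_all (\<lambda>a1. list_all (\<lambda>mu. list_all (\<lambda>e2. \<not> badE g rp a1 mu e2)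
  [1..<(g*g-1-a1*mu) div (rp*a1*mu+mu+a1) + 1]) [1..<(g*g-1-a1) div (rp*a1+a1+1) + 1]) [1..<(g*g-2) div (rp+2) + 1]"
    using list_all_upt_mem[OF list_all_upt_mem[OF checkE], of g rp] assms i0 by auto
  from list_all_upt_mem[OF list_all_upt_mem[OF list_all_upt_mem[OF this]], of a1 mu e2]
  show ?thesis using assms i1 i2 i3 by auto
qed


lemma arith_final:
  fixes g kp rp a1 mu e2 :: nat
  assumes g1: "1 \<le> g" and g8: "g \<le> 8" and rp1: "1 \<le> rp" and kr: "kp \<le> rp"
    and npar: "\<not>(even kp \<and> even rp)" and pos: "1 \<le> a1" "1 \<le> mu" "1 \<le> e2"
    and eq: "g*g*kp = g + (a1+mu+e2 + rp*(a1*mu+mu*e2+a1*e2) + rp*rp*(a1*mu*e2))"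
    and p1: "even (kp*a1)" and p2: "even (kp*(a1+mu+rp*a1*mu))" and p3: "even (kp*e2)"
  shows False
proof -
  define S where "S = a1+mu+e2 + rp*(a1*mu+mu*e2+a1*e2) + rp*rp*(a1*mu*e2)"
  have g0: "0 < g*g" using g1 by simp
  have SG: "S + g = g*g*kp" using eq by (simp add: S_def)
  have bad: "badE g rp a1 mu e2"
    unfolding badE_def Let_def S_def[symmetric] SG using g0 kr by simp
  have bnd: "rp*(a1*mu*e2) + (a1*mu+mu*e2+a1*e2) \<le> g*g - 1"
  proof -
    have "rp*(rp*(a1*mu*e2) + (a1*mu+mu*e2+a1*e2)) \<le> S"
      by (simp add: S_def algebra_simps)
    also have "S < g*g*kp" using SG g1 by linarith
    also have "g*g*kp \<le> g*g*rp" using kr by simp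
    finally have "rp*(rp*(a1*mu*e2) + (a1*mu+mu*e2+a1*e2)) < rp*(g*g)" by (simp add: ac_simps)
    hence "rp*(a1*mu*e2) + (a1*mu+mu*e2+a1*e2) < g*g" by (simp only: mult_less_cancel1)
    thus ?thesis by linarith
  qed
  show False
  proof (cases "even kp")
    case True
    hence orp: "odd rp" using npar by blast
    have "rp \<noteq> 1"
    proof
      assume "rp = 1"
      hence "kp = 0" using kr True by presburger
      thus False using SG g1 by simp
    qed
    hence rp3: "3 \<le> rp" using orp rp1 by presburger
    show False using even_case[OF g1 g8 rp3 orp pos bnd] bad by simp
  next
    case False
    have ea: "even a1" using p1 False by simp
    have ee: "even e2" using p3 False by simp
    have "even (a1+mu+rp*a1*mu)" using p2 False by simp
    hence em: "even mu" using ea by simp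
    obtain a where a: "a1 = 2*a" using ea by blast
    obtain m where m: "mu = 2*m" using em by blast
    obtain e where e: "e2 = 2*e" using ee by blast
    have pos': "1 \<le> a" "1 \<le> m" "1 \<le> e" using pos a m e by auto
    have "rp*(a1*mu*e2) = 8*(rp*(a*m*e))" by (simp add: a m e algebra_simps)
    hence "8*(rp*(a*m*e)) \<le> 63" using bnd g8 mult_le_mono[OF g8 g8] by linarith
    hence b7: "rp*(a*m*e) \<le> 7" by linarith
    show False using odd_case[OF g1 g8 rp1 pos' b7] bad a m e by simp
  qed
qed
lemma rp_dvd_aux:
  fixes rp c X kp g k r :: nat
  assumes "k = g*kp" "r = g*rp" "0 < g" "coprime kp rp" "k*(c-1) = r*X" "0 < rp"
  shows "\<exists>A. c - 1 = rp*A \<and> X = kp*A"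
proof -
  have "g*(kp*(c-1)) = g*(rp*X)" using assms by (simp add: ac_simps)
  hence e: "kp*(c-1) = rp*X" using assms(3) by simp
  hence "rp dvd kp*(c-1)" by simp
  hence "rp dvd (c-1)" using assms(4) by (simp add: coprime_commute coprime_dvd_mult_right_iff)
  then obtain A where A: "c - 1 = rp*A" by blast
  have "rp*(kp*A) = rp*X" using e A by (simp add: ac_simps)
  hence "X = kp*A" using assms(6) by simp
  thus ?thesis using A by blast
qed

lemma arith_main:
  fixes k r v c1 c2 X1 X2 :: nat
  assumes k2: "2 < k" and kr: "k \<le> r" and v: "v = 1 + r*(k-1)" and c1: "1 < c1"
    and d12: "c1 dvd c2" and l12: "c1 < c2" and d2v: "c2 dvd v" and l2v: "c2 < v"
    and x1: "k*(c1-1) = r*X1" and x2: "k*(c2-1) = r*X2" and ev1: "even X1" and ev2: "even X2"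
    and g8: "gcd k r \<le> 8"
  shows False
proof -
  define g where "g = gcd k r"
  have g0: "0 < g" using k2 by (simp add: g_def)
  obtain kp where kp: "k = g*kp" unfolding g_def by (metis dvd_def gcd_dvd1)
  obtain rp where rp: "r = g*rp" unfolding g_def by (metis dvd_def gcd_dvd2)
  have kpd: "kp = k div g" using kp g0 by simp
  have rpd: "rp = r div g" using rp g0 by simp
  have cop: "coprime kp rp" unfolding kpd rpd g_def using k2 by (intro div_gcd_coprime) simp
  have kprp: "kp \<le> rp" using kr kp rp g0 by simp
  have kp1: "1 \<le> kp" using kp k2 by (cases kp) auto
  have rp1: "0 < rp" using kp1 kprp by simp
  obtain a1 where A1: "c1 - 1 = rp*a1" "X1 = kp*a1" using rp_dvd_aux[OF kp rp g0 cop x1 rp1] by blast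
  obtain A2 where A2: "c2 - 1 = rp*A2" "X2 = kp*A2" using rp_dvd_aux[OF kp rp g0 cop x2 rp1] by blast
  obtain m where m: "c2 = c1*m" using d12 by blast
  obtain d where d: "v = c2*d" using d2v by blast
  have m2: "2 \<le> m" using m l12 c1 by (cases m) auto
  have d2: "2 \<le> d" using d l2v by (cases d) auto
  have c1e: "c1 = 1 + rp*a1" using A1 c1 by simp
  have c2e: "c2 = 1 + rp*A2" using A2 l12 c1 by simp
  have vm1: "v - 1 = rp*(g*(k-1))" using v rp by simp
  have "c2 - 1 = (c1 - 1)*m + (m - 1)" using m c1 m2 by (simp add: algebra_simps)
  hence "rp*A2 = rp*a1*m + (m - 1)" using A1 A2 by simp
  hence "rp dvd rp*a1*m + (m - 1)" by (metis dvd_triv_left)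
  hence "rp dvd (m - 1)" by (simp add: dvd_add_right_iff mult.assoc)
  then obtain mu where mu: "m - 1 = rp*mu" by blast
  have "v - 1 = (c2 - 1)*d + (d - 1)" using d l12 c1 d2 by (simp add: algebra_simps)
  hence "rp*(g*(k-1)) = rp*A2*d + (d - 1)" using A2 vm1 by simp
  hence "rp dvd rp*A2*d + (d - 1)" by (metis dvd_triv_left)
  hence "rp dvd (d - 1)" by (simp add: dvd_add_right_iff mult.assoc)
  then obtain e2 where e2: "d - 1 = rp*e2" by blast
  have me: "m = 1 + rp*mu" using mu m2 by simp
  have de: "d = 1 + rp*e2" using e2 d2 by simp
  have mu1: "1 \<le> mu" using me m2 by (cases mu) auto
  have e21: "1 \<le> e2" using de d2 by (cases e2) auto
  have a11: "1 \<le> a1" using c1e c1 by (cases a1) auto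
  define S where "S = a1+mu+e2 + rp*(a1*mu+mu*e2+a1*e2) + rp*rp*(a1*mu*e2)"
  have "rp*A2 = rp*(a1+mu+rp*a1*mu)" using c2e m c1e me by (simp add: algebra_simps)
  hence A2e: "A2 = a1+mu+rp*a1*mu" using rp1 by simp
  have "rp*(g*(k-1)) = rp*S" using vm1 d m c1e me de by (simp add: S_def algebra_simps)
  hence gS: "g*(k-1) = S" using rp1 by simp
  have "g*(k-1) = g*g*kp - g" using kp by (simp add: algebra_simps)
  moreover have "g*1 \<le> g*(g*kp)" using g0 kp1 by (intro mult_le_mono2) simp
  moreover have "g*(g*kp) = g*g*kp" by (simp add: mult.assoc)
  ultimately have eq: "g*g*kp = g + S" using gS by linarith
  have S2: "S = A2 + e2 + rp*A2*e2" using A2e by (simp add: S_def algebra_simps)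
  have "k*(k-1) = kp*S" using gS kp by (simp add: ac_simps)
  also have "\<dots> = X2*d + kp*e2" using S2 A2 de by (simp add: algebra_simps)
  finally have kk: "k*(k-1) = X2*d + kp*e2" .
  have "even (k*(k-1))" by (cases k) simp_all
  hence h: "even (X2*d + kp*e2)" unfolding kk .
  have "even (X2*d)" using ev2 by simp
  hence p3: "even (kp*e2)" using h by (metis even_add)
  have npar: "\<not>(even kp \<and> even rp)" using cop by fastforce
  have gg: "1 \<le> g" "g \<le> 8" using g0 g8 unfolding g_def by linarith+
  show False
    apply (rule arith_final[of g rp kp a1 mu e2])
    using gg rp1 kprp npar a11 mu1 e21 eq p3 ev1 ev2 A1 A2 A2e by (simp_all add: S_def)
qed


definition cl :: "'a set set \<Rightarrow> 'a \<Rightarrow> 'a set" where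
  "cl C x = (THE D. D \<in> C \<and> x \<in> D)"

lemma part_ex1:
  assumes "partition_on P C" "x \<in> P"
  shows "\<exists>!D. D \<in> C \<and> x \<in> D"
proof -
  have "P = \<Union>C" using assms(1) by (rule partition_onD1)
  then obtain D where D: "D \<in> C" "x \<in> D" using assms(2) by blast
  have dj: "disjoint C" using assms(1) by (rule partition_onD2)
  show ?thesis
  proof (rule ex1I[of _ D])
    show "D \<in> C \<and> x \<in> D" using D by blast
    fix E assume "E \<in> C \<and> x \<in> E"
    thus "E = D" using dj D unfolding disjoint_def by blast
  qed
qed

lemma cl_mem: "partition_on P C \<Longrightarrow> x \<in> P \<Longrightarrow> cl C x \<in> C \<and> x \<in> cl C x"
  unfolding cl_def by (rule theI') (rule part_ex1)

lemma cl_eq: "partition_on P C \<Longrightarrow> D \<in> C \<Longrightarrow> x \<in> D \<Longrightarrow> cl C x = D"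
proof -
  assume a: "partition_on P C" "D \<in> C" "x \<in> D"
  have "x \<in> P" using a partition_onD1[OF a(1)] by blast
  thus ?thesis unfolding cl_def using a part_ex1[OF a(1)] by (intro the1_equality) auto
qed

lemma part_sub: "partition_on P C \<Longrightarrow> D \<in> C \<Longrightarrow> D \<subseteq> P"
  using partition_onD1 by blast

lemma part_ne: "partition_on P C \<Longrightarrow> D \<in> C \<Longrightarrow> D \<noteq> {}"
  using partition_onD3 by blast

lemma part_disj: "partition_on P C \<Longrightarrow> D \<in> C \<Longrightarrow> E \<in> C \<Longrightarrow> x \<in> D \<Longrightarrow> x \<in> E \<Longrightarrow> D = E"
  using partition_onD2 unfolding disjoint_def by blast

definition Xc :: "'a set set \<Rightarrow> 'a set \<Rightarrow> nat" where
  "Xc C l = (\<Sum>x\<in>l. card (l \<inter> cl C x) - 1)"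

context
  fixes P :: "'a set" and L :: "'a set set" and k r :: nat
  assumes LS: "linear_space P L" and Lk: "\<forall>l\<in>L. card l = k" and k2: "2 < k"
    and kv: "k < card P" and Lr: "\<forall>x\<in>P. card {l\<in>L. x \<in> l} = r"
begin

lemma finP: "finite P" using LS by (simp add: linear_space_def)
lemma lineP: "l \<in> L \<Longrightarrow> l \<subseteq> P" using LS by (simp add: linear_space_def)
lemma finL: "finite L"
proof -
  have "L \<subseteq> Pow P" using lineP by blast
  moreover have "finite (Pow P)" using finP by simp
  ultimately show ?thesis by (rule finite_subset)
qed
lemma finl: "l \<in> L \<Longrightarrow> finite l" using lineP finP finite_subset by blast

lemma exists_line: "x \<in> P \<Longrightarrow> y \<in> P \<Longrightarrow> x \<noteq> y \<Longrightarrow> \<exists>l\<in>L. x \<in> l \<and> y \<in> l"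
  using LS unfolding linear_space_def by blast

lemma line_eq: "l \<in> L \<Longrightarrow> m \<in> L \<Longrightarrow> x \<in> l \<Longrightarrow> y \<in> l \<Longrightarrow> x \<in> m \<Longrightarrow> y \<in> m \<Longrightarrow> x \<noteq> y \<Longrightarrow> l = m"
proof -
  assume a: "l \<in> L" "m \<in> L" "x \<in> l" "y \<in> l" "x \<in> m" "y \<in> m" "x \<noteq> y"
  have "x \<in> P" "y \<in> P" using a lineP by auto
  hence "\<exists>!l. l \<in> L \<and> x \<in> l \<and> y \<in> l" using LS a(7) unfolding linear_space_def by blast
  thus ?thesis using a by blast
qed

lemma point_sum:
  assumes "\<alpha> \<in> T" "T \<subseteq> P"
  shows "card T - 1 = (\<Sum>l\<in>{l\<in>L. \<alpha> \<in> l}. card (l \<inter> T) - 1)"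
proof -
  let ?I = "{l\<in>L. \<alpha> \<in> l}"
  have eq: "T - {\<alpha>} = (\<Union>l\<in>?I. (l \<inter> T) - {\<alpha>})"
  proof
    show "T - {\<alpha>} \<subseteq> (\<Union>l\<in>?I. (l \<inter> T) - {\<alpha>})"
    proof
      fix y assume y: "y \<in> T - {\<alpha>}"
      then obtain l where "l \<in> L" "\<alpha> \<in> l" "y \<in> l" using exists_line[of \<alpha> y] assms by blast
      thus "y \<in> (\<Union>l\<in>?I. (l \<inter> T) - {\<alpha>})" using y by blast
    qed
  qed blast
  have "card (T - {\<alpha>}) = (\<Sum>l\<in>?I. card ((l \<inter> T) - {\<alpha>}))"
    unfolding eq
  proof (rule card_UN_disjoint)
    show "finite ?I" using finL by simp
    show "\<forall>l\<in>?I. finite (l \<inter> T - {\<alpha>})" using finl by blast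
    show "\<forall>l\<in>?I. \<forall>m\<in>?I. l \<noteq> m \<longrightarrow> (l \<inter> T - {\<alpha>}) \<inter> (m \<inter> T - {\<alpha>}) = {}"
      using line_eq by blast
  qed
  also have "\<dots> = (\<Sum>l\<in>?I. card (l \<inter> T) - 1)"
    by (rule sum.cong) (use assms finl in auto)
  finally show ?thesis using assms by simp
qed

lemma sum_const_lines:
  assumes "\<alpha> \<in> P" "\<forall>l\<in>{l\<in>L. \<alpha> \<in> l}. f l = c"
  shows "(\<Sum>l\<in>{l\<in>L. \<alpha> \<in> l}. f l) = r * c"
  using assms Lr by simp

lemma vr: "card P = 1 + r*(k-1)"
proof -
  have "P \<noteq> {}" using kv by auto
  then obtain \<alpha> where a: "\<alpha> \<in> P" by blast
  have "card P - 1 = (\<Sum>l\<in>{l\<in>L. \<alpha> \<in> l}. card (l \<inter> P) - 1)" using point_sum[OF a] by simp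
  also have "\<dots> = r*(k-1)" using a Lk lineP by (intro sum_const_lines) (auto simp: Int_absorb2)
  finally show ?thesis using a kv by linarith
qed

lemma some_line: "\<exists>l. l \<in> L"
proof -
  have "\<not> card P \<le> Suc 0" using kv k2 by linarith
  then obtain x y where "x \<in> P" "y \<in> P" "x \<noteq> y" using card_le_Suc0_iff_eq[OF finP] by blast
  thus ?thesis using exists_line by blast
qed

lemma kr: "k \<le> r"
proof -
  obtain l where l: "l \<in> L" using some_line by blast
  have "\<not> P \<subseteq> l"
  proof
    assume "P \<subseteq> l"
    hence "card P \<le> card l" using finl[OF l] card_mono by blast
    thus False using kv Lk l by simp
  qed
  then obtain \<alpha> where a: "\<alpha> \<in> P" "\<alpha> \<notin> l" by blast
  have "card (insert \<alpha> l) - 1 = (\<Sum>m\<in>{m\<in>L. \<alpha> \<in> m}. card (m \<inter> insert \<alpha> l) - 1)"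
    using point_sum[of \<alpha> "insert \<alpha> l"] a lineP l by blast
  also have "\<dots> = (\<Sum>m\<in>{m\<in>L. \<alpha> \<in> m}. card (m \<inter> l))"
  proof (rule sum.cong)
    fix m assume m: "m \<in> {m\<in>L. \<alpha> \<in> m}"
    have "m \<inter> insert \<alpha> l = insert \<alpha> (m \<inter> l)" using m by blast
    thus "card (m \<inter> insert \<alpha> l) - 1 = card (m \<inter> l)" using a finl[OF l] by simp
  qed simp
  also have "\<dots> \<le> of_nat (card {m\<in>L. \<alpha> \<in> m}) * 1"
  proof (rule sum_bounded_above)
    fix m assume m: "m \<in> {m\<in>L. \<alpha> \<in> m}"
    have "\<forall>x\<in>m \<inter> l. \<forall>y\<in>m \<inter> l. x = y"
    proof (intro ballI, rule ccontr)
      fix x y assume "x \<in> m \<inter> l" "y \<in> m \<inter> l" "x \<noteq> y"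
      hence "m = l" using line_eq[of m l x y] m l by blast
      thus False using m a by blast
    qed
    thus "card (m \<inter> l) \<le> 1" using card_le_Suc0_iff_eq[of "m \<inter> l"] finl[OF l] by simp
  qed
  finally show ?thesis using a Lr Lk l finl[OF l] by simp
qed

lemma double_count:
  "(\<Sum>x\<in>P. \<Sum>l\<in>{l\<in>L. x \<in> l}. h x l) = (\<Sum>l\<in>L. \<Sum>x\<in>l. h x l)"
proof -
  have "(\<Sum>x\<in>P. \<Sum>l\<in>{l\<in>L. x \<in> l}. h x l) = (\<Sum>x\<in>P. \<Sum>l\<in>L. if x \<in> l then h x l else 0)"
    using finL by (simp add: sum.inter_filter)
  also have "\<dots> = (\<Sum>l\<in>L. \<Sum>x\<in>P. if x \<in> l then h x l else 0)" by (rule sum.swap)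
  also have "\<dots> = (\<Sum>l\<in>L. \<Sum>x\<in>{x\<in>P. x \<in> l}. h x l)"
    using finP by (simp add: sum.inter_filter)
  also have "\<dots> = (\<Sum>l\<in>L. \<Sum>x\<in>l. h x l)"
  proof (rule sum.cong)
    fix l assume "l \<in> L"
    hence "{x\<in>P. x \<in> l} = l" using lineP by blast
    thus "(\<Sum>x\<in>{x\<in>P. x \<in> l}. h x l) = (\<Sum>x\<in>l. h x l)" by simp
  qed simp
  finally show ?thesis .
qed


lemma X_even:
  assumes pC: "partition_on P C" and l: "l \<in> L"
  shows "even (Xc C l)"
proof -
  have finC: "finite C" by (rule finite_elements[OF finP pC])
  have lU: "l = (\<Union>D\<in>C. l \<inter> D)" using lineP[OF l] partition_onD1[OF pC] by blast
  have "Xc C l = (\<Sum>x\<in>(\<Union>D\<in>C. l \<inter> D). card (l \<inter> cl C x) - 1)"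
    unfolding Xc_def by (rule sum.cong[OF lU]) (rule refl)
  also have "\<dots> = (\<Sum>D\<in>C. \<Sum>x\<in>l \<inter> D. card (l \<inter> cl C x) - 1)"
  proof (rule sum.UNION_disjoint[OF finC])
    show "\<forall>D\<in>C. finite (l \<inter> D)" using finl[OF l] by blast
    show "\<forall>D\<in>C. \<forall>E\<in>C. D \<noteq> E \<longrightarrow> (l \<inter> D) \<inter> (l \<inter> E) = {}"
      using part_disj[OF pC] by blast
  qed
  also have "\<dots> = (\<Sum>D\<in>C. card (l \<inter> D) * (card (l \<inter> D) - 1))"
  proof (rule sum.cong[OF refl])
    fix D assume D: "D \<in> C"
    have "(\<Sum>x\<in>l \<inter> D. card (l \<inter> cl C x) - 1) = (\<Sum>x\<in>l \<inter> D. card (l \<inter> D) - 1)"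
      using cl_eq[OF pC D] by (intro sum.cong) auto
    thus "(\<Sum>x\<in>l \<inter> D. card (l \<inter> cl C x) - 1) = card (l \<inter> D) * (card (l \<inter> D) - 1)" by simp
  qed
  also have "even \<dots>"
  proof (rule dvd_sum)
    fix D assume "D \<in> C"
    show "2 dvd card (l \<inter> D) * (card (l \<inter> D) - 1)" by (cases "card (l \<inter> D)") simp_all
  qed
  finally show ?thesis .
qed

context
  fixes G :: "('a \<Rightarrow> 'a) set"
  assumes aut: "aut_subgroup P L G" and lt: "line_transitive L G"
begin

lemma gaut: assumes "g \<in> G" shows "automorphism P L g"
proof -
  have "\<forall>g\<in>G. automorphism P L g" using aut by (simp add: aut_subgroup_def)
  thus ?thesis using assms by blast
qed
lemma gperm: assumes "g \<in> G" shows "g permutes P"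
  using gaut[OF assms] by (simp add: automorphism_def)
lemma ginj: "g \<in> G \<Longrightarrow> inj g" by (rule permutes_inj[OF gperm])
lemma gP: "g \<in> G \<Longrightarrow> g ` P = P" by (rule permutes_image[OF gperm])

lemma const_line:
  assumes "\<forall>g\<in>G. g ` T = T" "l \<in> L" "m \<in> L"
  shows "card (l \<inter> T) = card (m \<inter> T)"
proof -
  have "\<forall>l\<in>L. \<forall>m\<in>L. \<exists>g\<in>G. g ` l = m" using lt by (simp only: line_transitive_def)
  then obtain g where g: "g \<in> G" "g ` l = m" using assms(2,3) by blast
  have ig: "inj g" by (rule ginj[OF g(1)])
  have gT: "g ` T = T" using assms(1) g(1) by blast
  have "g ` (l \<inter> T) = g ` l \<inter> g ` T" by (rule image_Int[OF ig])
  hence mt: "m \<inter> T = g ` (l \<inter> T)" using g(2) gT by simp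
  have "inj_on g (l \<inter> T)" using ig by (rule inj_on_subset) simp
  hence "card (g ` (l \<inter> T)) = card (l \<inter> T)" by (rule card_image)
  thus ?thesis using mt by simp
qed

lemma count_inv:
  assumes "T \<subseteq> P" "\<forall>g\<in>G. g ` T = T" "x \<in> T" "l0 \<in> L"
  shows "card T = 1 + r * (card (l0 \<inter> T) - 1) \<and> 1 \<le> card (l0 \<inter> T)"
proof -
  have xP: "x \<in> P" using assms(1,3) by blast
  have e1: "card T - 1 = (\<Sum>l\<in>{l\<in>L. x \<in> l}. card (l \<inter> T) - 1)"
    by (rule point_sum[OF assms(3) assms(1)])
  have cc: "\<forall>l\<in>{l\<in>L. x \<in> l}. card (l \<inter> T) - 1 = card (l0 \<inter> T) - 1"
  proof
    fix l assume "l \<in> {l\<in>L. x \<in> l}"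
    hence "l \<in> L" by simp
    thus "card (l \<inter> T) - 1 = card (l0 \<inter> T) - 1" using const_line[OF assms(2) _ assms(4)] by simp
  qed
  have e2: "(\<Sum>l\<in>{l\<in>L. x \<in> l}. card (l \<inter> T) - 1) = r * (card (l0 \<inter> T) - 1)"
    by (rule sum_const_lines[OF xP cc])
  have "0 < r" using kr k2 by simp
  hence "card {l\<in>L. x \<in> l} \<noteq> 0" using Lr xP by simp
  hence "{l\<in>L. x \<in> l} \<noteq> {}" by (intro notI) simp
  then obtain l1 where l1: "l1 \<in> L" "x \<in> l1" by blast
  have "x \<in> l1 \<inter> T" using l1 assms(3) by blast
  hence "l1 \<inter> T \<noteq> {}" by blast
  hence "0 < card (l1 \<inter> T)" using finl[OF l1(1)] by (simp add: card_gt_0_iff)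
  moreover have "card (l1 \<inter> T) = card (l0 \<inter> T)" by (rule const_line[OF assms(2) l1(1) assms(4)])
  ultimately have c1: "1 \<le> card (l0 \<inter> T)" by simp
  have "finite T" using assms(1) finP finite_subset by blast
  hence "0 < card T" using assms(3) card_gt_0_iff[of T] by blast
  thus ?thesis using e1 e2 c1 by linarith
qed

lemma invariant_set:
  assumes "T \<subseteq> P" "T \<noteq> {}" "\<forall>g\<in>G. g ` T \<subseteq> T"
  shows "T = P"
proof (rule ccontr)
  assume ne: "T \<noteq> P"
  define Q where "Q = P - T"
  have Qne: "Q \<noteq> {}" using ne assms(1) Q_def by blast
  have finT: "finite T" using assms(1) finP finite_subset by blast
  have invT: "\<forall>g\<in>G. g ` T = T"
  proof
    fix g assume g: "g \<in> G"
    have i: "inj_on g T" using ginj[OF g] unfolding inj_def inj_on_def by blast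
    have s: "g ` T \<subseteq> T" using assms(3) g by blast
    show "g ` T = T" by (rule endo_inj_surj[OF finT s i])
  qed
  have invQ: "\<forall>g\<in>G. g ` Q = Q"
  proof
    fix g assume g: "g \<in> G"
    have "g ` (P - T) = g ` P - g ` T" by (rule image_set_diff[OF ginj[OF g]])
    also have "\<dots> = P - T" using gP[OF g] invT g by simp
    finally show "g ` Q = Q" unfolding Q_def .
  qed
  obtain l0 where l0: "l0 \<in> L" using some_line by blast
  have QP: "Q \<subseteq> P" using Q_def by blast
  obtain x where x: "x \<in> T" using assms(2) by blast
  obtain y where y: "y \<in> Q" using Qne by blast
  have cT: "card T = 1 + r * (card (l0 \<inter> T) - 1)" "1 \<le> card (l0 \<inter> T)"
    using count_inv[OF assms(1) invT x l0] by auto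
  have cQ: "card Q = 1 + r * (card (l0 \<inter> Q) - 1)" "1 \<le> card (l0 \<inter> Q)"
    using count_inv[OF QP invQ y l0] by auto
  have "l0 = (l0 \<inter> T) \<union> (l0 \<inter> Q)" using lineP[OF l0] Q_def by blast
  hence "card l0 = card (l0 \<inter> T) + card (l0 \<inter> Q)"
  proof -
    have "card ((l0 \<inter> T) \<union> (l0 \<inter> Q)) = card (l0 \<inter> T) + card (l0 \<inter> Q)"
      by (rule card_Un_disjoint) (use finl[OF l0] Q_def in auto)
    thus ?thesis using \<open>l0 = (l0 \<inter> T) \<union> (l0 \<inter> Q)\<close> by simp
  qed
  hence kk: "k = card (l0 \<inter> T) + card (l0 \<inter> Q)" using Lk l0 by simp
  have "card Q = card P - card T" unfolding Q_def using assms(1) finT by (simp add: card_Diff_subset)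
  moreover have "card T \<le> card P" using assms(1) finP by (simp add: card_mono)
  ultimately have "card P = card T + card Q" by simp
  hence "1 + r*(k-1) = 1 + r * (card (l0 \<inter> T) - 1) + 1 + r * (card (l0 \<inter> Q) - 1)"
    using vr cT cQ by simp
  moreover have "k - 1 = (card (l0 \<inter> T) - 1) + (card (l0 \<inter> Q) - 1) + 1" using kk cT cQ by simp
  ultimately have "r = 1"
  proof -
    assume h1: "1 + r*(k-1) = 1 + r * (card (l0 \<inter> T) - 1) + 1 + r * (card (l0 \<inter> Q) - 1)"
      and h2: "k - 1 = (card (l0 \<inter> T) - 1) + (card (l0 \<inter> Q) - 1) + 1"
    have "r*(k-1) = r * (card (l0 \<inter> T) - 1) + r * (card (l0 \<inter> Q) - 1) + r"
      unfolding h2 by (simp add: algebra_simps)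
    thus ?thesis using h1 by linarith
  qed
  thus False using kr k2 by simp
qed


lemma uniform:
  assumes pC: "partition_on P C" and iC: "G_invariant G C" and D: "D \<in> C" and E: "E \<in> C"
  shows "card E = card D"
proof -
  define T where "T = \<Union>{F\<in>C. card F = card D}"
  have TP: "T \<subseteq> P" using part_sub[OF pC] unfolding T_def by blast
  have "D \<subseteq> T" using D unfolding T_def by blast
  hence Tne: "T \<noteq> {}" using part_ne[OF pC D] by blast
  have inv: "\<forall>g\<in>G. g ` T \<subseteq> T"
  proof (intro ballI subsetI)
    fix g y assume g: "g \<in> G" and y: "y \<in> g ` T"
    obtain x where x: "x \<in> T" "y = g x" using y by blast
    then obtain F where xF: "F \<in> C" "card F = card D" "x \<in> F" unfolding T_def by blast
    have gF: "g ` F \<in> C" using iC g xF(1) unfolding G_invariant_def by blast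
    have "inj_on g F" using ginj[OF g] by (rule inj_on_subset) simp
    hence "card (g ` F) = card F" by (rule card_image)
    hence m: "g ` F \<in> {F\<in>C. card F = card D}" using gF xF(2) by simp
    have "y \<in> g ` F" using x(2) xF(3) by simp
    thus "y \<in> T" using m unfolding T_def by (rule UnionI[rotated])
  qed
  have TeqP: "T = P" by (rule invariant_set[OF TP Tne inv])
  obtain y where y: "y \<in> E" using part_ne[OF pC E] by blast
  hence "y \<in> T" using part_sub[OF pC E] TeqP by blast
  then obtain F where F: "F \<in> C" "card F = card D" "y \<in> F" unfolding T_def by blast
  have "E = F" by (rule part_disj[OF pC E F(1) y F(3)])
  thus ?thesis using F by simp
qed

lemma cl_img:
  assumes pC: "partition_on P C" and iC: "G_invariant G C" and g: "g \<in> G" and x: "x \<in> P"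
  shows "cl C (g x) = g ` (cl C x)"
proof -
  have c: "cl C x \<in> C" "x \<in> cl C x" using cl_mem[OF pC x] by auto
  have "g ` (cl C x) \<in> C" using iC g c(1) unfolding G_invariant_def by blast
  moreover have "g x \<in> g ` (cl C x)" using c(2) by blast
  ultimately show ?thesis by (rule cl_eq[OF pC])
qed

lemma X_inv:
  assumes pC: "partition_on P C" and iC: "G_invariant G C" and g: "g \<in> G" and l: "l \<in> L"
  shows "Xc C (g ` l) = Xc C l"
proof -
  have ig: "inj g" by (rule ginj[OF g])
  have il: "inj_on g l" using ig by (rule inj_on_subset) simp
  have "Xc C (g ` l) = (\<Sum>y\<in>g ` l. card (g ` l \<inter> cl C y) - 1)" by (simp add: Xc_def)
  also have "\<dots> = (\<Sum>x\<in>l. card (g ` l \<inter> cl C (g x)) - 1)"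
    by (rule sum.reindex_cong[OF il refl]) simp
  also have "\<dots> = (\<Sum>x\<in>l. card (l \<inter> cl C x) - 1)"
  proof (rule sum.cong[OF refl])
    fix x assume x: "x \<in> l"
    hence xP: "x \<in> P" using lineP[OF l] by blast
    have "g ` l \<inter> cl C (g x) = g ` l \<inter> g ` (cl C x)" using cl_img[OF pC iC g xP] by simp
    also have "\<dots> = g ` (l \<inter> cl C x)" by (rule image_Int[OF ig, symmetric])
    finally have e: "g ` l \<inter> cl C (g x) = g ` (l \<inter> cl C x)" .
    have "inj_on g (l \<inter> cl C x)" using ig by (rule inj_on_subset) simp
    hence "card (g ` (l \<inter> cl C x)) = card (l \<inter> cl C x)" by (rule card_image)
    thus "card (g ` l \<inter> cl C (g x)) - 1 = card (l \<inter> cl C x) - 1" using e by simp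
  qed
  also have "\<dots> = Xc C l" by (simp add: Xc_def)
  finally show ?thesis .
qed

lemma X_const:
  assumes pC: "partition_on P C" and iC: "G_invariant G C" and l: "l \<in> L" and m: "m \<in> L"
  shows "Xc C m = Xc C l"
proof -
  have "\<forall>l\<in>L. \<forall>m\<in>L. \<exists>g\<in>G. g ` l = m" using lt by (simp only: line_transitive_def)
  then obtain g where g: "g \<in> G" "g ` l = m" using l m by blast
  show ?thesis using X_inv[OF pC iC g(1) l] g(2) by simp
qed

lemma X_eq:
  assumes pC: "partition_on P C" and iC: "G_invariant G C" and cC: "\<forall>D\<in>C. card D = c"
    and l0: "l0 \<in> L"
  shows "k * (c - 1) = r * Xc C l0"
proof -
  have h1: "(\<Sum>x\<in>P. \<Sum>l\<in>{l\<in>L. x \<in> l}. card (l \<inter> cl C x) - 1) = (\<Sum>x\<in>P. c - 1)"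
  proof (rule sum.cong[OF refl])
    fix x assume x: "x \<in> P"
    have c: "cl C x \<in> C" "x \<in> cl C x" using cl_mem[OF pC x] by auto
    have "card (cl C x) - 1 = (\<Sum>l\<in>{l\<in>L. x \<in> l}. card (l \<inter> cl C x) - 1)"
      by (rule point_sum[OF c(2) part_sub[OF pC c(1)]])
    thus "(\<Sum>l\<in>{l\<in>L. x \<in> l}. card (l \<inter> cl C x) - 1) = c - 1" using cC c(1) by simp
  qed
  have h2: "(\<Sum>x\<in>P. \<Sum>l\<in>{l\<in>L. x \<in> l}. card (l \<inter> cl C x) - 1) = (\<Sum>l\<in>L. Xc C l)"
    unfolding Xc_def by (rule double_count)
  have h3: "(\<Sum>l\<in>L. Xc C l) = (\<Sum>l\<in>L. Xc C l0)"
    using X_const[OF pC iC l0] by (intro sum.cong) auto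
  have A: "card P * (c - 1) = card L * Xc C l0" using h1 h2 h3 by simp
  have h4: "(\<Sum>x\<in>P. \<Sum>l\<in>{l\<in>L. x \<in> l}. (1::nat)) = (\<Sum>l\<in>L. \<Sum>x\<in>l. 1)"
    by (rule double_count)
  have h5: "(\<Sum>x\<in>P. \<Sum>l\<in>{l\<in>L. x \<in> l}. (1::nat)) = card P * r" using Lr by simp
  have h6: "(\<Sum>l\<in>L. \<Sum>x\<in>l. (1::nat)) = card L * k" using Lk by simp
  have B: "card P * r = card L * k" using h4 h5 h6 by simp
  have "card P * (k * (c - 1)) = k * (card L * Xc C l0)" using A by (simp add: ac_simps)
  also have "\<dots> = card P * (r * Xc C l0)" using B by (simp add: ac_simps)
  finally show ?thesis using kv by simp
qed

end
end

lemma part_card: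
  assumes fP: "finite P" and pC: "partition_on P C" and u: "\<forall>D\<in>C. card D = c"
  shows "card P = c * card C"
proof -
  have "card P = card (\<Union>C)" using partition_onD1[OF pC] by simp
  also have "\<dots> = sum card C"
  proof (rule card_Union_disjoint)
    show "pairwise disjnt C" using partition_onD2[OF pC] by simp
    fix A assume "A \<in> C"
    hence "A \<subseteq> P" using part_sub[OF pC] by blast
    thus "finite A" using fP by (rule finite_subset)
  qed
  also have "\<dots> = (\<Sum>D\<in>C. c)" using u by (intro sum.cong) auto
  also have "\<dots> = c * card C" by simp
  finally show ?thesis .
qed

lemma refine_props:
  assumes fP: "finite P" and p1: "partition_on P C1" and p2: "partition_on P C2"
    and u1: "\<forall>D\<in>C1. card D = c1" and u2: "\<forall>D\<in>C2. card D = c2"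
    and ref: "Defs.refines C1 C2" and ne: "C1 \<noteq> C2" and D: "D \<in> C2"
  shows "c1 dvd c2 \<and> c1 < c2"
proof -
  have refD: "\<forall>d\<in>C1. \<exists>c\<in>C2. d \<subseteq> c" using ref by (simp add: Defs.refines_def)
  define S where "S = {d\<in>C1. d \<subseteq> D}"
  have DS: "D = \<Union>S"
  proof
    show "D \<subseteq> \<Union>S"
    proof
      fix x assume x: "x \<in> D"
      hence xP: "x \<in> P" using part_sub[OF p2 D] by blast
      have c: "cl C1 x \<in> C1" "x \<in> cl C1 x" using cl_mem[OF p1 xP] by auto
      then obtain E where E: "E \<in> C2" "cl C1 x \<subseteq> E" using refD by blast
      have "x \<in> E" using E(2) c(2) by blast
      hence "E = D" using part_disj[OF p2 E(1) D _ x] by blast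
      thus "x \<in> \<Union>S" using c E unfolding S_def by blast
    qed
  qed (auto simp: S_def)
  have finS: "\<forall>A\<in>S. finite A"
  proof
    fix A assume "A \<in> S"
    hence "A \<subseteq> P" using part_sub[OF p1] unfolding S_def by blast
    thus "finite A" using fP by (rule finite_subset)
  qed
  have "card D = sum card S" unfolding DS
  proof (rule card_Union_disjoint)
    show "pairwise disjnt S" using partition_onD2[OF p1] unfolding S_def
      by (rule pairwise_subset) blast
    fix A assume "A \<in> S" thus "finite A" using finS by blast
  qed
  also have "\<dots> = (\<Sum>d\<in>S. c1)" using u1 unfolding S_def by (intro sum.cong) auto
  also have "\<dots> = c1 * card S" by simp
  finally have "c2 = c1 * card S" using u2 D by simp
  hence dv: "c1 dvd c2" by simp
  have finD: "finite D" using part_sub[OF p2 D] fP by (rule finite_subset)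
  have "D \<noteq> {}" by (rule part_ne[OF p2 D])
  hence "0 < card D" using finD by (simp add: card_gt_0_iff)
  hence c2pos: "0 < c2" using u2 D by simp
  have "c1 \<noteq> c2"
  proof
    assume eq: "c1 = c2"
    have sub: "C1 \<subseteq> C2"
    proof
      fix d assume d: "d \<in> C1"
      then obtain E where E: "E \<in> C2" "d \<subseteq> E" using refD by blast
      have "finite E" using part_sub[OF p2 E(1)] fP by (rule finite_subset)
      moreover have "card d = card E" using u1 u2 d E eq by simp
      ultimately have "d = E" using E(2) by (metis card_subset_eq)
      thus "d \<in> C2" using E by simp
    qed
    have "C2 \<subseteq> C1"
    proof
      fix E assume E: "E \<in> C2"
      obtain x where x: "x \<in> E" using part_ne[OF p2 E] by blast
      hence xP: "x \<in> P" using part_sub[OF p2 E] by blast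
      have c: "cl C1 x \<in> C1" "x \<in> cl C1 x" using cl_mem[OF p1 xP] by auto
      have "cl C1 x \<in> C2" using sub c(1) by blast
      hence "cl C1 x = E" using part_disj[OF p2 _ E c(2) x] by blast
      thus "E \<in> C1" using c by simp
    qed
    thus False using sub ne by blast
  qed
  moreover have "c1 \<le> c2" using dv c2pos by (simp add: dvd_imp_le)
  ultimately show ?thesis using dv by simp
qed

lemma chain_false:
  fixes P :: "'a set" and L :: "'a set set" and G :: "('a \<Rightarrow> 'a) set"
    and C1 C2 :: "'a set set" and k r :: nat
  assumes LS: "linear_space P L"
    and Lk: "\<forall>l\<in>L. card l = k"
    and k2: "2 < k" and kv: "k < card P"
    and Lr: "\<forall>x\<in>P. card {l\<in>L. x \<in> l} = r"
    and aut: "aut_subgroup P L G"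
    and lt: "line_transitive L G"
    and g8: "gcd k r \<le> 8"
    and n1: "nontrivial_partition P C1" and i1: "G_invariant G C1"
    and n2: "nontrivial_partition P C2" and i2: "G_invariant G C2"
    and ref: "Defs.refines C1 C2" and ne: "C1 \<noteq> C2"
  shows False
proof -
  have p1: "partition_on P C1" and cc1: "1 < card C1" and big1: "\<forall>D\<in>C1. 1 < card D"
    using n1 by (auto simp: nontrivial_partition_def)
  have p2: "partition_on P C2" and cc2: "1 < card C2" and big2: "\<forall>D\<in>C2. 1 < card D"
    using n2 by (auto simp: nontrivial_partition_def)
  have fP: "finite P" by (rule finP[OF LS Lk k2 kv Lr])
  have "C1 \<noteq> {}" using cc1 by (intro notI) simp
  then obtain D1 where D1: "D1 \<in> C1" by blast
  have "C2 \<noteq> {}" using cc2 by (intro notI) simp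
  then obtain D2 where D2: "D2 \<in> C2" by blast
  have u1: "\<forall>D\<in>C1. card D = card D1"
    using uniform[OF LS Lk k2 kv Lr aut lt p1 i1 D1] by blast
  have u2: "\<forall>D\<in>C2. card D = card D2"
    using uniform[OF LS Lk k2 kv Lr aut lt p2 i2 D2] by blast
  obtain l0 where l0: "l0 \<in> L" using some_line[OF LS Lk k2 kv Lr] by blast
  have x1: "k * (card D1 - 1) = r * Xc C1 l0" by (rule X_eq[OF LS Lk k2 kv Lr aut lt p1 i1 u1 l0])
  have x2: "k * (card D2 - 1) = r * Xc C2 l0" by (rule X_eq[OF LS Lk k2 kv Lr aut lt p2 i2 u2 l0])
  have e1: "even (Xc C1 l0)" by (rule X_even[OF LS Lk k2 kv Lr p1 l0])
  have e2: "even (Xc C2 l0)" by (rule X_even[OF LS Lk k2 kv Lr p2 l0])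
  have v: "card P = 1 + r * (k - 1)" by (rule vr[OF LS Lk k2 kv Lr])
  have kr': "k \<le> r" by (rule kr[OF LS Lk k2 kv Lr])
  have rp: "card D1 dvd card D2 \<and> card D1 < card D2"
    by (rule refine_props[OF fP p1 p2 u1 u2 ref ne D2])
  have pc: "card P = card D2 * card C2" by (rule part_card[OF fP p2 u2])
  have c1: "1 < card D1" using big1 D1 by blast
  have c2: "1 < card D2" using big2 D2 by blast
  have dv: "card D2 dvd card P" using pc by simp
  have "card D2 * 1 < card D2 * card C2" using c2 cc2 by (intro mult_strict_left_mono) auto
  hence lt2: "card D2 < card P" using pc by simp
  show False
    by (rule arith_main[OF k2 kr' v c1 conjunct1[OF rp] conjunct2[OF rp] dv lt2 x1 x2 e1 e2 g8])
qed

theorem theorem4p11: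
  fixes P :: "'a set" and L :: "'a set set" and G :: "('a \<Rightarrow> 'a) set"
    and C :: "'a set set" and k r :: nat
  assumes "linear_space P L"
    and "\<forall>l\<in>L. card l = k"
    and "2 < k" and "k < card P"
    and "\<forall>x\<in>P. card {l\<in>L. x \<in> l} = r"
    and "aut_subgroup P L G"
    and "line_transitive L G"
    and "nontrivial_partition P C"
    and "G_invariant G C"
    and "gcd k r \<le> 8"
  shows "two_step_imprimitive P G C"
  unfolding two_step_imprimitive_def minimal_partition_def maximal_partition_def
proof (intro conjI notI)
  assume "\<exists>D. nontrivial_partition P D \<and> G_invariant G D \<and> Defs.refines D C \<and> D \<noteq> C"
  then obtain D where D: "nontrivial_partition P D" "G_invariant G D" "Defs.refines D C" "D \<noteq> C" by blast
  show False by (rule chain_false[OF assms(1-7) assms(10) D(1,2) assms(8,9) D(3,4)])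
next
  assume "\<exists>D. nontrivial_partition P D \<and> G_invariant G D \<and> Defs.refines C D \<and> D \<noteq> C"
  then obtain D where D: "nontrivial_partition P D" "G_invariant G D" "Defs.refines C D" "D \<noteq> C" by blast
  have ne: "C \<noteq> D" using D(4) by blast
  show False by (rule chain_false[OF assms(1-7) assms(10) assms(8,9) D(1,2) D(3) ne])
qed

end
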